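(* Let $\phi,\psi$ be Drinfeld modules over $K$ with $n=\operatorname{rk}\phi>\operatorname{rk}\psi$. Identify $\operatorname{Ext}^1_\tau(\phi,\psi)$ with $K^n$ via $(c_0,\dots,c_{n-1})\mapsto$ the class of the biderivation $\delta$ with $\delta(t)=\sum_{i=0}^{n-1}c_i\tau^i$ (this is a bijection). Then $\operatorname{Ext}^1_\tau(\phi,\psi)$ has a natural structure of a $\mathbf t$-module: there is a $\mathbf t$-module $\Pi:\mathbb F_q[t]\to\mathrm{Mat}_n(K\{\tau\})$ such that for every $c\in K^n$, multiplication by $t$ on $\operatorname{Ext}^1_\tau(\phi,\psi)$ sends the class corresponding to $c$ to the class corresponding to $\Pi_t(c)$ (evaluation, $\tau$ acting coordinatewise as $x\mapsto x^q$), and $\Pi_t$ has the block form $$\Pi_t=\begin{bmatrix}\theta&0&\cdots&0\\ \delta_1&&&\\ \vdots&&\Pi^0_t&\\ \delta_{n-1}&&&\end{bmatrix}$$ with $\delta_1,\dots,\delta_{n-1}\in K\{\tau\}$ and $\Pi^0_t\in\mathrm{Mat}_{n-1}(K\{\tau\})$.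
   Context: $A=\mathbb F_q[t]$, $K$ a field of characteristic $p$ with an $\mathbb F_q$-algebra map $\iota:A\to K$, $\theta=\iota(t)$; $K\{\tau\}$ is the ring of twisted polynomials with $\tau x=x^q\tau$. A $\mathbf t$-module of dimension $d$ is an $\mathbb F_q$-algebra homomorphism $\Phi:\mathbb F_q[t]\to\mathrm{Mat}_d(K\{\tau\})$ with $\Phi_t=(\theta I_d+N)+\sum_{i\ge1}M_i\tau^i$, $N$ nilpotent, $M_i\in\mathrm{Mat}_d(K)$; rank $=\deg_\tau\Phi_t$. A Drinfeld module is a $\mathbf t$-module of dimension 1. $\mathrm{Der}(\phi,\psi)$ is the space of $\mathbb F_q$-linear $\delta:\mathbb F_q[t]\to K\{\tau\}$ with $\delta(ab)=\psi_a\delta(b)+\delta(a)\phi_b$ (determined by $\delta(t)$, which can be arbitrary); inner biderivations are $\delta^{(U)}(a)=U\phi_a-\psi_aU$, $U\in K\{\tau\}$. $\operatorname{Ext}^1_\tau(\phi,\psi)$ is identified with $\mathrm{Der}(\phi,\psi)/\mathrm{Der}_{in}(\phi,\psi)$ with $\mathbb F_q[t]$-module structure $a*[\delta]=[\psi_a\delta]$. *)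

theory Defs
  imports "HOL-Computational_Algebra.Polynomial"
begin

text \<open>An element of K{tau} is stored as a polynomial whose i-th coefficient is the
coefficient of tau^i.  Addition is coefficientwise; multiplication is twisted by
tau x = x^q tau.\<close>

definition tmul :: "nat \<Rightarrow> 'k::field poly \<Rightarrow> 'k poly \<Rightarrow> 'k poly" where
  "tmul q f g = (\<Sum>i\<le>degree f. \<Sum>j\<le>degree g. monom (coeff f i * coeff g j ^ (q ^ i)) (i + j))"

fun tpow :: "nat \<Rightarrow> 'k::field poly \<Rightarrow> nat \<Rightarrow> 'k poly" where
  "tpow q f 0 = 1"
| "tpow q f (Suc m) = tmul q f (tpow q f m)"

definition tp_eval :: "nat \<Rightarrow> 'k::field poly \<Rightarrow> 'k \<Rightarrow> 'k" where
  "tp_eval q f x = (\<Sum>i\<le>degree f. coeff f i * x ^ (q ^ i))"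

definition Fq :: "nat \<Rightarrow> 'k::field set" where
  "Fq q = {x. x ^ q = x}"

text \<open>A = F_q[t], realised as polynomials (in t) over K with coefficients in F_q.\<close>
definition Aring :: "nat \<Rightarrow> 'k::field poly set" where
  "Aring q = {a. \<forall>i. coeff a i \<in> Fq q}"

definition kmatmul :: "nat \<Rightarrow> (nat \<Rightarrow> nat \<Rightarrow> 'k::field) \<Rightarrow> (nat \<Rightarrow> nat \<Rightarrow> 'k) \<Rightarrow> nat \<Rightarrow> nat \<Rightarrow> 'k" where
  "kmatmul d X Y = (\<lambda>i j. \<Sum>k<d. X i k * Y k j)"

fun kmatpow :: "nat \<Rightarrow> (nat \<Rightarrow> nat \<Rightarrow> 'k::field) \<Rightarrow> nat \<Rightarrow> nat \<Rightarrow> nat \<Rightarrow> 'k" where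
  "kmatpow d X 0 = (\<lambda>i j. if i = j then 1 else 0)"
| "kmatpow d X (Suc m) = kmatmul d X (kmatpow d X m)"

definition nilpotent_mat :: "nat \<Rightarrow> (nat \<Rightarrow> nat \<Rightarrow> 'k::field) \<Rightarrow> bool" where
  "nilpotent_mat d N \<longleftrightarrow> (\<exists>m. \<forall>i<d. \<forall>j<d. kmatpow d N m i j = 0)"

text \<open>A t-module of dimension d is the F_q-algebra homomorphism F_q[t] -> Mat_d(K{tau})
determined by its value Phi_t (F_q[t] is free on t); we record Phi_t as a d x d
matrix of twisted polynomials.\<close>
definition t_module :: "'k::field \<Rightarrow> nat \<Rightarrow> (nat \<Rightarrow> nat \<Rightarrow> 'k poly) \<Rightarrow> bool" where
  "t_module \<theta> d M \<longleftrightarrow> (\<exists>N. nilpotent_mat d N \<and>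
      (\<forall>i<d. \<forall>j<d. coeff (M i j) 0 = (if i = j then \<theta> else 0) + N i j))"

definition t_rank :: "nat \<Rightarrow> (nat \<Rightarrow> nat \<Rightarrow> 'k::zero poly) \<Rightarrow> nat" where
  "t_rank d M = Max (insert 0 {degree (M i j) | i j. i < d \<and> j < d})"

definition drinfeld_module :: "'k::field \<Rightarrow> 'k poly \<Rightarrow> bool" where
  "drinfeld_module \<theta> \<phi>t \<longleftrightarrow> t_module \<theta> 1 (\<lambda>_ _. \<phi>t)"

definition drinfeld_rank :: "'k::field poly \<Rightarrow> nat" where
  "drinfeld_rank \<phi>t = t_rank 1 (\<lambda>_ _. \<phi>t)"

definition dm_eval :: "nat \<Rightarrow> 'k::field poly \<Rightarrow> 'k poly \<Rightarrow> 'k poly" where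
  "dm_eval q \<phi>t a = (\<Sum>i\<le>degree a. smult (coeff a i) (tpow q \<phi>t i))"

definition biderivation :: "nat \<Rightarrow> 'k::field poly \<Rightarrow> 'k poly \<Rightarrow> ('k poly \<Rightarrow> 'k poly) \<Rightarrow> bool" where
  "biderivation q \<phi>t \<psi>t \<delta> \<longleftrightarrow>
     (\<forall>a\<in>Aring q. \<forall>b\<in>Aring q. \<delta> (a + b) = \<delta> a + \<delta> b) \<and>
     (\<forall>c\<in>Fq q. \<forall>a\<in>Aring q. \<delta> (smult c a) = smult c (\<delta> a)) \<and>
     (\<forall>a\<in>Aring q. \<forall>b\<in>Aring q.
        \<delta> (a * b) = tmul q (dm_eval q \<psi>t a) (\<delta> b) + tmul q (\<delta> a) (dm_eval q \<phi>t b))"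

definition inner_biderivation :: "nat \<Rightarrow> 'k::field poly \<Rightarrow> 'k poly \<Rightarrow> ('k poly \<Rightarrow> 'k poly) \<Rightarrow> bool" where
  "inner_biderivation q \<phi>t \<psi>t \<delta> \<longleftrightarrow>
     (\<exists>U. \<forall>a\<in>Aring q. \<delta> a = tmul q U (dm_eval q \<phi>t a) - tmul q (dm_eval q \<psi>t a) U)"

definition ext_eq :: "nat \<Rightarrow> 'k::field poly \<Rightarrow> 'k poly \<Rightarrow> ('k poly \<Rightarrow> 'k poly) \<Rightarrow> ('k poly \<Rightarrow> 'k poly) \<Rightarrow> bool" where
  "ext_eq q \<phi>t \<psi>t \<delta> \<delta>' \<longleftrightarrow> inner_biderivation q \<phi>t \<psi>t (\<lambda>a. \<delta> a - \<delta>' a)"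

definition ext_smul :: "nat \<Rightarrow> 'k::field poly \<Rightarrow> 'k poly \<Rightarrow> ('k poly \<Rightarrow> 'k poly) \<Rightarrow> ('k poly \<Rightarrow> 'k poly)" where
  "ext_smul q \<psi>t a \<delta> = (\<lambda>b. tmul q (dm_eval q \<psi>t a) (\<delta> b))"

definition tau_vec :: "nat \<Rightarrow> (nat \<Rightarrow> 'k::comm_monoid_add) \<Rightarrow> 'k poly" where
  "tau_vec n c = (\<Sum>i<n. monom (c i) i)"

definition mat_tp_eval :: "nat \<Rightarrow> nat \<Rightarrow> (nat \<Rightarrow> nat \<Rightarrow> 'k::field poly) \<Rightarrow> (nat \<Rightarrow> 'k) \<Rightarrow> nat \<Rightarrow> 'k" where
  "mat_tp_eval q d P c = (\<lambda>i. \<Sum>j<d. tp_eval q (P i j) (c j))"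

end

theory Submission imports Defs begin

lemma sum_atMost_extend:
  fixes f :: "nat \<Rightarrow> 'a::comm_monoid_add"
  assumes "m \<le> M" "\<And>i. m < i \<Longrightarrow> i \<le> M \<Longrightarrow> f i = 0"
  shows "(\<Sum>i\<le>M. f i) = (\<Sum>i\<le>m. f i)"
  by (rule sum.mono_neutral_right) (use assms in auto)

lemma coeff_tmul:
  assumes "q > 0"
  shows "coeff (tmul q f g) k = (\<Sum>i\<le>k. coeff f i * coeff g (k - i) ^ (q ^ i))"
proof -
  define A where "A = max (degree f) k"
  define B where "B = max (degree g) k"
  have "coeff (tmul q f g) k = (\<Sum>i\<le>degree f. \<Sum>j\<le>degree g. (if i + j = k then coeff f i * coeff g j ^ (q ^ i) else 0))"
    by (simp add: tmul_def coeff_sum coeff_monom)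
  also have "\<dots> = (\<Sum>i\<le>A. \<Sum>j\<le>degree g. (if i + j = k then coeff f i * coeff g j ^ (q ^ i) else 0))"
    by (rule sum_atMost_extend[symmetric]) (auto simp: A_def coeff_eq_0 intro!: sum.neutral)
  also have "\<dots> = (\<Sum>i\<le>A. \<Sum>j\<le>B. (if i + j = k then coeff f i * coeff g j ^ (q ^ i) else 0))"
    apply (rule sum.cong[OF refl])
    apply (rule sum_atMost_extend[symmetric])
    using assms by (auto simp: B_def coeff_eq_0)
  also have "\<dots> = (\<Sum>i\<le>A. (if i \<le> k then coeff f i * coeff g (k - i) ^ (q ^ i) else 0))"
  proof (rule sum.cong[OF refl])
    fix i assume "i \<in> {..A}"
    show "(\<Sum>j\<le>B. (if i + j = k then coeff f i * coeff g j ^ (q ^ i) else 0)) =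
          (if i \<le> k then coeff f i * coeff g (k - i) ^ (q ^ i) else 0)"
    proof (cases "i \<le> k")
      case True
      have "(\<Sum>j\<le>B. (if i + j = k then coeff f i * coeff g j ^ (q ^ i) else 0)) =
            (\<Sum>j\<le>B. (if j = k - i then coeff f i * coeff g j ^ (q ^ i) else 0))"
        by (rule sum.cong) (use True in auto)
      also have "\<dots> = coeff f i * coeff g (k - i) ^ (q ^ i)"
        by (subst sum.delta) (auto simp: B_def)
      finally show ?thesis using True by simp
    qed auto
  qed
  also have "\<dots> = (\<Sum>i\<le>k. (if i \<le> k then coeff f i * coeff g (k - i) ^ (q ^ i) else 0))"
    by (rule sum_atMost_extend) (auto simp: A_def)
  also have "\<dots> = (\<Sum>i\<le>k. coeff f i * coeff g (k - i) ^ (q ^ i))"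
    by simp
  finally show ?thesis .
qed

locale tw =
  fixes q :: nat
  assumes q_pos: "q > 0"
    and frob: "\<And>x y :: 'k::field. (x + y) ^ q = x ^ q + y ^ q"
begin

lemma frob_pow: "((x::'k) + y) ^ (q ^ i) = x ^ (q ^ i) + y ^ (q ^ i)"
proof (induction i)
  case (Suc i)
  have "(x + y) ^ (q ^ Suc i) = ((x + y) ^ (q ^ i)) ^ q"
    by (simp add: power_mult[symmetric] mult.commute)
  also have "\<dots> = (x ^ (q ^ i)) ^ q + (y ^ (q ^ i)) ^ q" by (simp add: Suc frob)
  also have "\<dots> = x ^ (q ^ Suc i) + y ^ (q ^ Suc i)"
    by (simp add: power_mult[symmetric] mult.commute)
  finally show ?case .
qed simp

lemma zero_pow_q [simp]: "(0::'k) ^ (q ^ i) = 0"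
  using q_pos by simp

lemma frob_sum: "(sum (f :: _ \<Rightarrow> 'k) S) ^ (q ^ i) = (\<Sum>x\<in>S. f x ^ (q ^ i))"
proof (induction S rule: infinite_finite_induct)
  case (insert x F)
  then show ?case by (simp add: frob_pow)
qed auto

lemma frob_neg: "(- (x::'k)) ^ (q ^ i) = - (x ^ (q ^ i))"
proof -
  have "(x + - x) ^ (q ^ i) = x ^ (q ^ i) + (- x) ^ (q ^ i)" by (rule frob_pow)
  then show ?thesis by (simp add: eq_neg_iff_add_eq_0 add.commute)
qed

lemma frob_diff: "((x::'k) - y) ^ (q ^ i) = x ^ (q ^ i) - y ^ (q ^ i)"
  using frob_pow[of x "- y" i] by (simp add: frob_neg)

lemma Fq_pow: "c \<in> Fq q \<Longrightarrow> (c::'k) ^ (q ^ i) = c"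
proof (induction i)
  case (Suc i)
  have "c ^ (q ^ Suc i) = (c ^ (q ^ i)) ^ q"
    by (simp add: power_mult[symmetric] mult.commute)
  also have "\<dots> = c ^ q" using Suc by simp
  also have "\<dots> = c" using Suc.prems by (simp add: Fq_def)
  finally show ?case .
qed simp

abbreviation tm :: "'k poly \<Rightarrow> 'k poly \<Rightarrow> 'k poly" where
  "tm \<equiv> tmul q"

lemma coeff_tm: "coeff (tm f g) k = (\<Sum>i\<le>k. coeff f i * coeff g (k - i) ^ (q ^ i))"
  using coeff_tmul[OF q_pos] .

lemma tm_add_left: "tm (f + g) h = tm f h + tm g h"
  by (rule poly_eqI) (simp add: coeff_tm algebra_simps sum.distrib)

lemma tm_add_right: "tm h (f + g) = tm h f + tm h g"
  by (rule poly_eqI) (simp add: coeff_tm algebra_simps sum.distrib frob_pow)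

lemma tm_zero_left [simp]: "tm 0 f = 0"
  by (rule poly_eqI) (simp add: coeff_tm)

lemma tm_zero_right [simp]: "tm f 0 = 0"
  by (rule poly_eqI) (simp add: coeff_tm)

lemma tm_minus_left: "tm (- f) h = - tm f h"
  by (rule poly_eqI) (simp add: coeff_tm sum_negf)

lemma tm_minus_right: "tm h (- f) = - tm h f"
  by (rule poly_eqI) (simp add: coeff_tm sum_negf frob_neg)

lemma tm_diff_left: "tm (f - g) h = tm f h - tm g h"
  using tm_add_left[of f "- g" h] by (simp add: tm_minus_left)

lemma tm_diff_right: "tm h (f - g) = tm h f - tm h g"
  using tm_add_right[of h f "- g"] by (simp add: tm_minus_right)

lemma tm_smult_left: "tm (smult c f) g = smult c (tm f g)"
  by (rule poly_eqI) (simp add: coeff_tm sum_distrib_left algebra_simps)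

lemma tm_smult_right: "c \<in> Fq q \<Longrightarrow> tm f (smult c g) = smult c (tm f g)"
  by (rule poly_eqI) (simp add: coeff_tm sum_distrib_left power_mult_distrib Fq_pow algebra_simps)

lemma coeff_tm_monom_left:
  "coeff (tm (monom u s) g) k = (if s \<le> k then u * coeff g (k - s) ^ (q ^ s) else 0)"
proof -
  have "coeff (tm (monom u s) g) k = (\<Sum>i\<le>k. if i = s then u * coeff g (k - s) ^ (q ^ s) else 0)"
    unfolding coeff_tm by (rule sum.cong) (auto simp: coeff_monom)
  also have "\<dots> = (if s \<le> k then u * coeff g (k - s) ^ (q ^ s) else 0)"
    by (cases "s \<le> k") (simp_all add: sum.delta)
  finally show ?thesis .
qed

lemma coeff_tm_monom_right:
  "coeff (tm g (monom u s)) k = (if s \<le> k then coeff g (k - s) * u ^ (q ^ (k - s)) else 0)"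
proof -
  have "coeff (tm g (monom u s)) k = (\<Sum>i\<le>k. if i = k - s \<and> s \<le> k then coeff g i * u ^ (q ^ i) else 0)"
    unfolding coeff_tm by (rule sum.cong) (auto simp: coeff_monom q_pos)
  also have "\<dots> = (if s \<le> k then coeff g (k - s) * u ^ (q ^ (k - s)) else 0)"
    by (cases "s \<le> k") (simp_all add: sum.delta)
  finally show ?thesis .
qed

lemma tm_monom0_left: "tm (monom c 0) g = smult c g"
  by (rule poly_eqI) (simp add: coeff_tm_monom_left)

lemma tm_one_left [simp]: "tm 1 g = g"
  using tm_monom0_left[of 1 g] by (simp add: one_pCons monom_0)

lemma tm_one_right [simp]: "tm g 1 = g"
  using coeff_tm_monom_right[of g 1 0] by (intro poly_eqI) (simp add: monom_0 one_pCons)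

lemma tm_pconst_left: "tm [:c:] g = smult c g"
  using tm_monom0_left by (simp add: monom_0)

lemma tm_assoc: "tm (tm f g) h = tm f (tm g h)"
proof (rule poly_eqI)
  fix m
  have "coeff (tm (tm f g) h) m = (\<Sum>k\<le>m. \<Sum>i\<le>k. coeff f i * coeff g (k - i) ^ (q ^ i) * coeff h (m - k) ^ (q ^ k))"
    by (simp add: coeff_tm sum_distrib_right)
  also have "\<dots> = (\<Sum>k\<le>m. \<Sum>i\<le>k. coeff f i * coeff g (k - i) ^ (q ^ i) * coeff h (m - i - (k - i)) ^ (q ^ (i + (k - i))))"
    by (intro sum.cong refl) auto
  also have "\<dots> = (\<Sum>(i,j)\<in>{(i,j). i + j \<le> m}. coeff f i * coeff g j ^ (q ^ i) * coeff h (m - i - j) ^ (q ^ (i + j)))"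
    by (rule sum.triangle_reindex_eq[symmetric])
  also have "\<dots> = (\<Sum>i\<le>m. \<Sum>j\<le>m - i. coeff f i * coeff g j ^ (q ^ i) * coeff h (m - i - j) ^ (q ^ (i + j)))"
  proof -
    have "{(i,j). i + j \<le> m} = Sigma {..m} (\<lambda>i. {..m - i})" by auto
    then show ?thesis by (simp add: sum.Sigma)
  qed
  also have "\<dots> = coeff (tm f (tm g h)) m"
    apply (simp add: coeff_tm frob_sum sum_distrib_left power_mult_distrib power_add power_mult mult.assoc)
    apply (intro sum.cong refl)
    apply (simp add: power_mult[symmetric] mult.commute)
    done
  finally show "coeff (tm (tm f g) h) m = coeff (tm f (tm g h)) m" .
qed


lemma tm_sum_right: "tm f (sum g S) = (\<Sum>x\<in>S. tm f (g x))"
  by (induction S rule: infinite_finite_induct) (simp_all add: tm_add_right)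

lemma tm_sum_left: "tm (sum g S) f = (\<Sum>x\<in>S. tm (g x) f)"
  by (induction S rule: infinite_finite_induct) (simp_all add: tm_add_left)

lemma Fq_0 [simp]: "(0::'k) \<in> Fq q" using q_pos by (simp add: Fq_def)
lemma Fq_1 [simp]: "(1::'k) \<in> Fq q" by (simp add: Fq_def)
lemma Fq_add: "x \<in> Fq q \<Longrightarrow> y \<in> Fq q \<Longrightarrow> (x + y :: 'k) \<in> Fq q"
  by (simp add: Fq_def frob)
lemma Fq_mult: "x \<in> Fq q \<Longrightarrow> y \<in> Fq q \<Longrightarrow> (x * y :: 'k) \<in> Fq q"
  by (simp add: Fq_def power_mult_distrib)
lemma Fq_sum: "(\<And>x. x \<in> S \<Longrightarrow> f x \<in> Fq q) \<Longrightarrow> (sum f S :: 'k) \<in> Fq q"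
  by (induction S rule: infinite_finite_induct) (auto intro: Fq_add)

lemma Aring_add: "(a::'k poly) \<in> Aring q \<Longrightarrow> b \<in> Aring q \<Longrightarrow> a + b \<in> Aring q"
  by (simp add: Aring_def Fq_add)
lemma Aring_mult: "(a::'k poly) \<in> Aring q \<Longrightarrow> b \<in> Aring q \<Longrightarrow> a * b \<in> Aring q"
  by (auto simp add: Aring_def coeff_mult intro!: Fq_sum Fq_mult)
lemma Aring_smult: "c \<in> Fq q \<Longrightarrow> (a::'k poly) \<in> Aring q \<Longrightarrow> smult c a \<in> Aring q"
  by (simp add: Aring_def Fq_mult)
lemma Aring_pCons: "pCons (c::'k) a \<in> Aring q \<longleftrightarrow> c \<in> Fq q \<and> a \<in> Aring q"
  by (auto simp add: Aring_def coeff_pCons split: nat.splits)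
lemma Aring_0 [simp]: "(0::'k poly) \<in> Aring q" by (simp add: Aring_def)
lemma Aring_1 [simp]: "(1::'k poly) \<in> Aring q" by (simp add: Aring_def coeff_1)
lemma Aring_t [simp]: "[:0, 1::'k:] \<in> Aring q" by (simp add: Aring_pCons)
lemma Aring_const: "(c::'k) \<in> Fq q \<Longrightarrow> [:c:] \<in> Aring q" by (simp add: Aring_pCons)

lemma smult_sum_right: "smult c (sum f S) = (\<Sum>x\<in>S. smult c (f x))"
  by (induction S rule: infinite_finite_induct) (simp_all add: smult_add_right)

definition lc :: "(nat \<Rightarrow> 'k poly) \<Rightarrow> 'k poly \<Rightarrow> 'k poly" where
  "lc E a = (\<Sum>i\<le>degree a. smult (coeff a i) (E i))"

lemma lc_bound: "degree a < N \<Longrightarrow> lc E a = (\<Sum>i<N. smult (coeff a i) (E i))"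
  unfolding lc_def by (rule sum.mono_neutral_left) (auto simp: coeff_eq_0)

lemma lc_add: "lc E (a + b) = lc E a + lc E b"
proof -
  define N where "N = Suc (max (degree a) (degree b))"
  have "degree (a + b) < N" using degree_add_le_max[of a b] by (simp add: N_def)
  then show ?thesis
    by (simp add: lc_bound[of a N] lc_bound[of b N] lc_bound[of "a + b" N] N_def sum.distrib smult_add_left)
qed

lemma lc_smult: "lc E (smult c a) = smult c (lc E a)"
proof -
  have "degree (smult c a) < Suc (degree a)" using degree_smult_le[of c a] by simp
  then have "lc E (smult c a) = (\<Sum>i<Suc (degree a). smult c (smult (coeff a i) (E i)))"
    by (simp add: lc_bound[of _ "Suc (degree a)"] del: sum.lessThan_Suc)
  also have "\<dots> = smult c (lc E a)"
    by (simp add: lc_bound[of a "Suc (degree a)"] smult_sum_right del: sum.lessThan_Suc)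
  finally show ?thesis .
qed

lemma lc_zero [simp]: "lc E 0 = 0" by (simp add: lc_def)

lemma lc_pCons: "lc E (pCons c a) = smult c (E 0) + lc (\<lambda>i. E (Suc i)) a"
proof -
  have "degree (pCons c a) < Suc (Suc (degree a))"
    by (simp add: degree_pCons_eq_if)
  then have "lc E (pCons c a) = (\<Sum>i<Suc (Suc (degree a)). smult (coeff (pCons c a) i) (E i))"
    by (rule lc_bound)
  also have "\<dots> = smult c (E 0) + (\<Sum>i<Suc (degree a). smult (coeff a i) (E (Suc i)))"
    by (simp add: sum.lessThan_Suc_shift del: sum.lessThan_Suc)
  also have "\<dots> = smult c (E 0) + lc (\<lambda>i. E (Suc i)) a"
    using lc_bound[of a "Suc (degree a)" "\<lambda>i. E (Suc i)"] by simp
  finally show ?thesis .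
qed

lemma lc_E_add: "lc (\<lambda>i. E i + E' i) a = lc E a + lc E' a"
  by (simp add: lc_def smult_add_right sum.distrib)

lemma lc_tm_right: "a \<in> Aring q \<Longrightarrow> tm f (lc E a) = lc (\<lambda>i. tm f (E i)) a"
  by (simp add: lc_def tm_sum_right tm_smult_right Aring_def)

lemma lc_tm_left: "tm (lc E a) f = lc (\<lambda>i. tm (E i) f) a"
  by (simp add: lc_def tm_sum_left tm_smult_left)

lemma lc_t: "lc E [:0, 1:] = E 1"
  by (simp add: lc_pCons)

lemma lc_const: "lc E [:c:] = smult c (E 0)"
  by (simp add: lc_pCons)

subsection \<open>The map a -> phi_a\<close>

lemma dm_lc: "dm_eval q (f::'k poly) a = lc (tpow q f) a"
  by (simp add: dm_eval_def lc_def)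

lemma dm_t [simp]: "dm_eval q (f::'k poly) [:0, 1:] = f"
  by (simp add: dm_lc lc_t)

lemma dm_zero [simp]: "dm_eval q (f::'k poly) 0 = 0" by (simp add: dm_lc)

lemma dm_one [simp]: "dm_eval q (f::'k poly) 1 = 1"
  by (simp add: dm_lc one_pCons lc_const)

lemma dm_add: "dm_eval q (f::'k poly) (a + b) = dm_eval q (f::'k poly) a + dm_eval q (f::'k poly) b"
  by (simp add: dm_lc lc_add)

lemma dm_smult: "dm_eval q (f::'k poly) (smult c a) = smult c (dm_eval q (f::'k poly) a)"
  by (simp add: dm_lc lc_smult)

lemma dm_pCons: "a \<in> Aring q \<Longrightarrow> dm_eval q (f::'k poly) (pCons c a) = [:c:] + tm f (dm_eval q (f::'k poly) a)"
  by (simp add: dm_lc lc_pCons lc_tm_right)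

lemma dm_mult: "a \<in> Aring q \<Longrightarrow> b \<in> Aring q \<Longrightarrow> dm_eval q (f::'k poly) (a * b) = tm (dm_eval q (f::'k poly) a) (dm_eval q (f::'k poly) b)"
proof (induction a rule: pCons_induct)
  case (pCons c a)
  then have c: "c \<in> Fq q" and a: "a \<in> Aring q" by (auto simp: Aring_pCons)
  have ab: "a * b \<in> Aring q" using a pCons.prems by (simp add: Aring_mult)
  have "pCons c a * b = smult c b + pCons 0 (a * b)" by simp
  then have "dm_eval q (f::'k poly) (pCons c a * b) = smult c (dm_eval q (f::'k poly) b) + tm f (dm_eval q (f::'k poly) (a * b))"
    using ab by (simp add: dm_add dm_smult dm_pCons)
  also have "\<dots> = smult c (dm_eval q (f::'k poly) b) + tm f (tm (dm_eval q (f::'k poly) a) (dm_eval q (f::'k poly) b))"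
    using pCons a by simp
  also have "\<dots> = tm (dm_eval q (f::'k poly) (pCons c a)) (dm_eval q (f::'k poly) b)"
    using a by (simp add: dm_pCons tm_add_left tm_pconst_left tm_assoc)
  finally show ?case .
qed simp

lemma dm_comm: "a \<in> Aring q \<Longrightarrow> b \<in> Aring q \<Longrightarrow> tm (dm_eval q (f::'k poly) a) (dm_eval q (f::'k poly) b) = tm (dm_eval q (f::'k poly) b) (dm_eval q (f::'k poly) a)"
  by (metis dm_mult mult.commute)

definition stepP :: "'k poly \<Rightarrow> 'k poly \<Rightarrow> ('k poly \<Rightarrow> 'k poly) \<Rightarrow> bool" where
  "stepP \<phi> \<psi> \<epsilon> \<longleftrightarrow> \<epsilon> 0 = 0 \<and>
     (\<forall>c\<in>Fq q. \<forall>a\<in>Aring q. \<epsilon> (pCons c a) = tm \<psi> (\<epsilon> a) + tm (\<epsilon> [:0, 1:]) (dm_eval q \<phi> a))"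

lemma step_unique:
  assumes "stepP \<phi> \<psi> e1" "stepP \<phi> \<psi> e2" "e1 [:0, 1:] = e2 [:0, 1:]" "a \<in> Aring q"
  shows "e1 a = e2 a"
  using assms(4)
proof (induction a rule: pCons_induct)
  case 0
  then show ?case using assms(1,2) by (simp add: stepP_def)
next
  case (pCons c a)
  then have "c \<in> Fq q" "a \<in> Aring q" by (auto simp: Aring_pCons)
  with pCons assms(1-3) show ?case by (simp add: stepP_def)
qed

lemma bider_step:
  fixes \<delta> :: "'k poly \<Rightarrow> 'k poly"
  assumes "biderivation q \<phi> \<psi> \<delta>"
  shows "stepP \<phi> \<psi> \<delta>"
proof -
  have add: "\<And>a b. a \<in> Aring q \<Longrightarrow> b \<in> Aring q \<Longrightarrow> \<delta> (a + b) = \<delta> a + \<delta> b"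
    and lin: "\<And>c a. c \<in> Fq q \<Longrightarrow> a \<in> Aring q \<Longrightarrow> \<delta> (smult c a) = smult c (\<delta> a)"
    and leib: "\<And>a b. a \<in> Aring q \<Longrightarrow> b \<in> Aring q \<Longrightarrow>
        \<delta> (a * b) = tm (dm_eval q \<psi> a) (\<delta> b) + tm (\<delta> a) (dm_eval q \<phi> b)"
    using assms by (auto simp: biderivation_def)
  have "\<delta> (0 + 0) = \<delta> 0 + \<delta> 0" by (rule add) simp_all
  then have z: "\<delta> 0 = 0" by (simp only: add_0 mult_1 add_cancel_right_right)
  have "\<delta> (1 * 1) = \<delta> 1 + \<delta> 1" using leib[of 1 1] by simp
  then have o: "\<delta> 1 = 0" by (simp only: add_0 mult_1 add_cancel_right_right)
  show ?thesis unfolding stepP_def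
  proof (intro conjI ballI)
    fix c :: 'k and a :: "'k poly" assume c: "c \<in> Fq q" and a: "a \<in> Aring q"
    have eq: "pCons c a = smult c 1 + [:0, 1:] * a" by (simp add: one_pCons)
    have "smult c 1 \<in> Aring q" "[:0, 1:] * a \<in> Aring q"
      using c a by (simp_all add: Aring_pCons)
    then have "\<delta> (pCons c a) = \<delta> (smult c 1) + \<delta> ([:0, 1:] * a)"
      unfolding eq by (rule add)
    also have "\<dots> = tm \<psi> (\<delta> a) + tm (\<delta> [:0, 1:]) (dm_eval q \<phi> a)"
      using lin[OF c, of 1] leib[of "[:0, 1:]" a] a o by simp
    finally show "\<delta> (pCons c a) = tm \<psi> (\<delta> a) + tm (\<delta> [:0, 1:]) (dm_eval q \<phi> a)" .
  qed (rule z)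
qed


lemma inner_step: "stepP (\<phi>::'k poly) \<psi> (\<lambda>a. tm U (dm_eval q \<phi> a) - tm (dm_eval q \<psi> a) U)"
  unfolding stepP_def
proof (intro conjI ballI)
  fix c :: 'k and a :: "'k poly" assume c: "c \<in> Fq q" and a: "a \<in> Aring q"
  have cU: "tm U [:c:] = smult c U"
    using tm_smult_right[OF c, of U 1] by (metis smult_one tm_one_right)
  have "tm U (dm_eval q \<phi> (pCons c a)) - tm (dm_eval q \<psi> (pCons c a)) U =
     (smult c U + tm U (tm \<phi> (dm_eval q \<phi> a))) - (smult c U + tm \<psi> (tm (dm_eval q \<psi> a) U))"
    using a by (simp only: dm_pCons tm_add_left tm_add_right cU tm_pconst_left tm_assoc)
  also have "\<dots> = tm \<psi> (tm U (dm_eval q \<phi> a) - tm (dm_eval q \<psi> a) U) +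
     tm (tm U \<phi> - tm \<psi> U) (dm_eval q \<phi> a)"
    by (simp add: tm_diff_left tm_diff_right tm_assoc)
  finally show "tm U (dm_eval q \<phi> (pCons c a)) - tm (dm_eval q \<psi> (pCons c a)) U =
     tm \<psi> (tm U (dm_eval q \<phi> a) - tm (dm_eval q \<psi> a) U) +
     tm (tm U (dm_eval q \<phi> [:0, 1:]) - tm (dm_eval q \<psi> [:0, 1:]) U) (dm_eval q \<phi> a)"
    by simp
qed simp


lemma step_diff: "stepP \<phi> \<psi> e1 \<Longrightarrow> stepP \<phi> \<psi> e2 \<Longrightarrow> stepP \<phi> \<psi> (\<lambda>a. e1 a - e2 a)"
  unfolding stepP_def by (auto simp: tm_diff_left tm_diff_right)

lemma step_lmul: "stepP \<phi> \<psi> e \<Longrightarrow> stepP \<phi> \<psi> (\<lambda>a. tm \<psi> (e a))"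
  unfolding stepP_def by (auto simp: tm_add_right tm_assoc)

lemma step_bider:
  fixes e :: "'k poly \<Rightarrow> 'k poly"
  assumes st: "stepP \<phi> \<psi> e"
    and add: "\<And>a b. a \<in> Aring q \<Longrightarrow> b \<in> Aring q \<Longrightarrow> e (a + b) = e a + e b"
    and lin: "\<And>c a. c \<in> Fq q \<Longrightarrow> a \<in> Aring q \<Longrightarrow> e (smult c a) = smult c (e a)"
  shows "biderivation q \<phi> \<psi> e"
  unfolding biderivation_def
proof (intro conjI ballI)
  fix a b :: "'k poly" assume a: "a \<in> Aring q" and b: "b \<in> Aring q"
  show "e (a + b) = e a + e b" using add a b .
  from a show "e (a * b) = tm (dm_eval q \<psi> a) (e b) + tm (e a) (dm_eval q \<phi> b)"
  proof (induction a rule: pCons_induct)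
    case 0
    then show ?case using st by (simp add: stepP_def)
  next
    case (pCons c a)
    then have c: "c \<in> Fq q" and a: "a \<in> Aring q" by (auto simp: Aring_pCons)
    have ab: "a * b \<in> Aring q" using a b by (simp add: Aring_mult)
    have eq: "pCons c a * b = smult c b + pCons 0 (a * b)" by simp
    have m: "smult c b \<in> Aring q" "pCons 0 (a * b) \<in> Aring q"
      using c b ab by (simp_all add: Aring_smult Aring_pCons)
    have "e (pCons c a * b) = smult c (e b) + e (pCons 0 (a * b))"
      unfolding eq add[OF m] lin[OF c b] ..
    also have "\<dots> = smult c (e b) + (tm \<psi> (e (a * b)) + tm (e [:0, 1:]) (dm_eval q \<phi> (a * b)))"
      using st ab by (simp add: stepP_def)
    also have "\<dots> = smult c (e b) + (tm \<psi> (tm (dm_eval q \<psi> a) (e b) + tm (e a) (dm_eval q \<phi> b))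
         + tm (e [:0, 1:]) (tm (dm_eval q \<phi> a) (dm_eval q \<phi> b)))"
      using pCons.IH a b by (simp add: dm_mult)
    also have "\<dots> = tm ([:c:] + tm \<psi> (dm_eval q \<psi> a)) (e b)
        + tm (tm \<psi> (e a) + tm (e [:0, 1:]) (dm_eval q \<phi> a)) (dm_eval q \<phi> b)"
      by (simp add: tm_add_left tm_add_right tm_pconst_left tm_assoc algebra_simps)
    also have "\<dots> = tm (dm_eval q \<psi> (pCons c a)) (e b) + tm (e (pCons c a)) (dm_eval q \<phi> b)"
      using st a c by (simp add: stepP_def dm_pCons)
    finally show ?case .
  qed
next
  fix c :: 'k and a :: "'k poly" assume "c \<in> Fq q" "a \<in> Aring q"
  then show "e (smult c a) = smult c (e a)" by (rule lin)
qed

subsection \<open>Existence of biderivations\<close>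

fun Eseq :: "'k poly \<Rightarrow> 'k poly \<Rightarrow> 'k poly \<Rightarrow> nat \<Rightarrow> 'k poly" where
  "Eseq \<phi> \<psi> D 0 = 0"
| "Eseq \<phi> \<psi> D (Suc i) = tm \<psi> (Eseq \<phi> \<psi> D i) + tm D (tpow q \<phi> i)"

lemma bider_exists: "biderivation q \<phi> \<psi> (lc (Eseq \<phi> \<psi> D)) \<and> lc (Eseq \<phi> \<psi> D) [:0, 1:] = D"
proof
  show t: "lc (Eseq \<phi> \<psi> D) [:0, 1:] = D" by (simp add: lc_t)
  show "biderivation q \<phi> \<psi> (lc (Eseq \<phi> \<psi> D))"
  proof (rule step_bider)
    show "stepP \<phi> \<psi> (lc (Eseq \<phi> \<psi> D))"
      unfolding stepP_def t
      by (simp add: lc_pCons lc_E_add lc_tm_right dm_lc)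
  qed (simp_all add: lc_add lc_smult)
qed


lemma coeff_tm_high: "degree f + degree g < k \<Longrightarrow> coeff (tm f g) k = 0"
  unfolding coeff_tm
proof (rule sum.neutral, intro ballI)
  fix i assume "degree f + degree g < k" "i \<in> {..k}"
  then have "degree f < i \<or> degree g < k - i" by auto
  then show "coeff f i * coeff g (k - i) ^ q ^ i = 0" by (auto simp: coeff_eq_0 q_pos)
qed

lemma coeff_tm_top: "coeff (tm f g) (degree f + degree g) = lead_coeff f * lead_coeff g ^ (q ^ degree f)"
proof -
  let ?K = "degree f + degree g"
  have "coeff (tm f g) ?K = (\<Sum>i\<le>?K. if i = degree f then lead_coeff f * lead_coeff g ^ (q ^ degree f) else 0)"
    unfolding coeff_tm
  proof (rule sum.cong[OF refl])
    fix i assume "i \<in> {..?K}"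
    then show "coeff f i * coeff g (?K - i) ^ q ^ i = (if i = degree f then lead_coeff f * lead_coeff g ^ (q ^ degree f) else 0)"
      by (cases "i < degree f") (auto simp: coeff_eq_0)
  qed
  then show ?thesis by simp
qed

lemma coeff_tau_vec: "coeff (tau_vec n c) i = (if i < n then c i else 0)"
  by (simp add: tau_vec_def coeff_sum coeff_monom)

lemma degree_lt: "0 < m \<Longrightarrow> (\<And>k. m \<le> k \<Longrightarrow> coeff p k = 0) \<Longrightarrow> degree p < m"
  using degree_le[of "m - 1" p] by force

lemma tau_vec_coeff: "0 < n \<Longrightarrow> degree p < n \<Longrightarrow> tau_vec n (coeff p) = p"
  by (rule poly_eqI) (auto simp: coeff_tau_vec coeff_eq_0)

subsection \<open>Evaluation of twisted polynomials\<close>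

lemma tp_bound: "degree p < N \<Longrightarrow> tp_eval q p x = (\<Sum>i<N. coeff p i * x ^ (q ^ i))"
  unfolding tp_eval_def by (rule sum.mono_neutral_left) (auto simp: coeff_eq_0)

lemma tp_add: "tp_eval q (p + p') x = tp_eval q p x + tp_eval q p' (x::'k)"
proof -
  define N where "N = Suc (max (degree p) (degree p'))"
  have "degree (p + p') < N" using degree_add_le_max[of p p'] by (simp add: N_def)
  then show ?thesis
    by (simp add: tp_bound[of p N] tp_bound[of p' N] tp_bound[of "p + p'" N] N_def sum.distrib algebra_simps
        del: sum.lessThan_Suc)
qed

lemma tp_diff: "tp_eval q (p - p') x = tp_eval q p x - tp_eval q p' (x::'k)"
proof -
  define N where "N = Suc (max (degree p) (degree p'))"
  have "degree (p - p') < N" using degree_diff_le_max[of p p'] by (simp add: N_def)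
  then show ?thesis
    by (simp add: tp_bound[of p N] tp_bound[of p' N] tp_bound[of "p - p'" N] N_def sum_subtractf algebra_simps
        del: sum.lessThan_Suc)
qed

lemma tp_smult: "tp_eval q (smult a p) x = a * tp_eval q p (x::'k)"
proof -
  have "degree (smult a p) < Suc (degree p)" using degree_smult_le[of a p] by simp
  then show ?thesis
    by (simp add: tp_bound[of _ "Suc (degree p)"] sum_distrib_left algebra_simps del: sum.lessThan_Suc)
qed

lemma tp_zero [simp]: "tp_eval q 0 (x::'k) = 0" by (simp add: tp_eval_def)

lemma tp_monom: "tp_eval q (monom b l) (x::'k) = b * x ^ (q ^ l)"
proof -
  have "tp_eval q (monom b l) x = (\<Sum>i<Suc l. coeff (monom b l) i * x ^ (q ^ i))"
    by (rule tp_bound) (simp add: degree_monom_eq le_less_trans[OF degree_monom_le])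
  also have "\<dots> = (\<Sum>i<Suc l. if i = l then b * x ^ (q ^ l) else 0)"
    by (rule sum.cong) (auto simp: coeff_monom)
  finally show ?thesis by simp
qed

lemma tp_tm_monom: "tp_eval q (tm (monom b l) p) (x::'k) = b * (tp_eval q p x) ^ (q ^ l)"
proof -
  define N where "N = Suc (degree p)"
  have dp: "degree p < N" by (simp add: N_def)
  have "degree (tm (monom b l) p) < N + l"
    by (rule degree_lt) (auto simp: coeff_tm_monom_left coeff_eq_0 N_def)
  then have "tp_eval q (tm (monom b l) p) x = (\<Sum>k<N + l. coeff (tm (monom b l) p) k * x ^ (q ^ k))"
    by (rule tp_bound)
  also have "\<dots> = (\<Sum>k<N + l. if l \<le> k then b * coeff p (k - l) ^ (q ^ l) * x ^ (q ^ k) else 0)"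
    by (rule sum.cong) (auto simp: coeff_tm_monom_left)
  also have "\<dots> = (\<Sum>k\<in>{l..<N + l}. b * coeff p (k - l) ^ (q ^ l) * x ^ (q ^ k))"
    by (rule sum.mono_neutral_cong_right) auto
  also have "\<dots> = (\<Sum>i\<in>{0..<N}. b * coeff p i ^ (q ^ l) * x ^ (q ^ (i + l)))"
    using sum.shift_bounds_nat_ivl[of "\<lambda>k. b * coeff p (k - l) ^ (q ^ l) * x ^ (q ^ k)" 0 l N] by simp
  also have "\<dots> = b * (\<Sum>i<N. (coeff p i * x ^ (q ^ i)) ^ (q ^ l))"
    by (simp add: sum_distrib_left atLeast0LessThan power_mult_distrib power_add power_mult[symmetric] algebra_simps)
  also have "\<dots> = b * (tp_eval q p x) ^ (q ^ l)"
    by (simp add: tp_bound[OF dp] frob_sum)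
  finally show ?thesis .
qed

end


locale tw2 = tw q for q :: nat +
  fixes \<phi> \<psi> :: "'k::field poly" and \<theta> :: 'k
  assumes phi0: "coeff \<phi> 0 = \<theta>" and psi0: "coeff \<psi> 0 = \<theta>" and rk: "degree \<psi> < degree \<phi>"
begin

abbreviation "n \<equiv> degree \<phi>"

lemma n_pos: "0 < n" using rk by simp

lemma lead_phi: "lead_coeff \<phi> \<noteq> 0" using n_pos by auto

lemma inner_t_nonzero:
  assumes "U \<noteq> 0"
  shows "coeff (tm U \<phi> - tm \<psi> U) (degree U + n) \<noteq> 0"
proof -
  have "coeff (tm \<psi> U) (degree U + n) = 0" by (rule coeff_tm_high) (use rk in simp)
  moreover have "coeff (tm U \<phi>) (degree U + n) = lead_coeff U * lead_coeff \<phi> ^ (q ^ degree U)"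
    by (rule coeff_tm_top)
  ultimately show ?thesis using assms lead_phi by simp
qed

lemma division: "\<exists>U. degree (D - (tm U \<phi> - tm \<psi> U)) < n"
proof (induction "degree D" arbitrary: D rule: less_induct)
  case less
  show ?case
  proof (cases "degree D < n")
    case True
    then show ?thesis by (intro exI[of _ 0]) simp
  next
    case False
    define m where "m = degree D"
    define s where "s = m - n"
    define u where "u = lead_coeff D / lead_coeff \<phi> ^ (q ^ s)"
    define D1 where "D1 = D - (tm (monom u s) \<phi> - tm \<psi> (monom u s))"
    have mn: "n \<le> m" using False m_def by simp
    have ms: "m = s + n" using mn s_def by simp
    have "degree D1 < m"
    proof (rule degree_lt)
      show "0 < m" using mn n_pos by simp
      fix k assume k: "m \<le> k"
      have psi: "coeff \<psi> (k - s) = 0" using k ms rk by (intro coeff_eq_0) simp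
      show "coeff D1 k = 0"
      proof (cases "k = m")
        case True
        have "coeff \<psi> n = 0" using rk by (intro coeff_eq_0) simp
        moreover have "coeff D (s + n) = lead_coeff D" using ms m_def by simp
        ultimately show ?thesis using lead_phi True
          by (simp add: D1_def coeff_tm_monom_left coeff_tm_monom_right psi ms u_def m_def)
      next
        case False
        then have "coeff D k = 0" "coeff \<phi> (k - s) = 0" using k ms m_def
          by (auto intro: coeff_eq_0)
        then show ?thesis using k ms
          by (simp add: D1_def coeff_tm_monom_left coeff_tm_monom_right psi)
      qed
    qed
    then obtain U1 where U1: "degree (D1 - (tm U1 \<phi> - tm \<psi> U1)) < n"
      using less m_def by blast
    have "D1 - (tm U1 \<phi> - tm \<psi> U1) = D - (tm (monom u s + U1) \<phi> - tm \<psi> (monom u s + U1))"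
      by (simp add: D1_def tm_add_left tm_add_right algebra_simps)
    then show ?thesis using U1 by metis
  qed
qed


definition rinv :: "(nat \<Rightarrow> nat \<Rightarrow> 'k poly) \<Rightarrow> bool" where
  "rinv R \<longleftrightarrow> (\<forall>k j. j < n \<longrightarrow> coeff (R k j) 0 = (if k = j then \<theta> else 0)) \<and>
     (\<forall>j<n. R 0 j = (if j = 0 then [:\<theta>:] else 0))"

lemma red_step:
  assumes N: "n \<le> N" and R: "rinv R"
  shows "\<exists>R''. rinv R'' \<and> (\<forall>c. \<exists>U. tau_vec (Suc N) (mat_tp_eval q n R c) - tau_vec N (mat_tp_eval q n R'' c)
            = tm U \<phi> - tm \<psi> U)"
proof -
  define s where "s = N - n"
  define L where "L = lead_coeff \<phi> ^ (q ^ s)"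
  define uR where "uR j = smult (inverse L) (R N j)" for j
  define R'' where "R'' k j = (if s \<le> k then R k j - smult (coeff \<phi> (k - s) ^ (q ^ s)) (uR j)
      + tm (monom (coeff \<psi> (k - s)) (k - s)) (uR j) else R k j)" for k j
  have Ns: "N = s + n" using N s_def by simp
  have L0: "L \<noteq> 0" using lead_phi by (simp add: L_def)
  have "rinv R''"
    unfolding rinv_def
  proof (intro conjI allI impI)
    fix k j assume j: "j < n"
    have "coeff (uR j) 0 = 0" using R j N by (simp add: rinv_def uR_def)
    then show "coeff (R'' k j) 0 = (if k = j then \<theta> else 0)"
      using R j by (simp add: rinv_def R''_def coeff_tm_monom_left)
  next
    fix j assume j: "j < n"
    show "R'' 0 j = (if j = 0 then [:\<theta>:] else 0)"
      using R j by (simp add: rinv_def R''_def tm_monom0_left phi0 psi0)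
  qed
  moreover have "\<exists>U. tau_vec (Suc N) (mat_tp_eval q n R c) - tau_vec N (mat_tp_eval q n R'' c)
            = tm U \<phi> - tm \<psi> U" for c
  proof -
    define w where "w j = tp_eval q (uR j) (c j)" for j
    define u where "u = (\<Sum>j<n. w j)"
    have u: "u = inverse L * mat_tp_eval q n R c N"
      by (simp add: u_def w_def uR_def tp_smult mat_tp_eval_def sum_distrib_left)
    have ev: "mat_tp_eval q n R'' c k = (if s \<le> k then mat_tp_eval q n R c k
        - coeff \<phi> (k - s) ^ (q ^ s) * u + coeff \<psi> (k - s) * u ^ (q ^ (k - s)) else mat_tp_eval q n R c k)" for k
    proof (cases "s \<le> k")
      case True
      have "mat_tp_eval q n R'' c k = (\<Sum>j<n. tp_eval q (R k j) (c j) - coeff \<phi> (k - s) ^ (q ^ s) * w j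
          + coeff \<psi> (k - s) * w j ^ (q ^ (k - s)))"
        using True by (simp add: mat_tp_eval_def R''_def tp_add tp_diff tp_smult tp_tm_monom w_def)
      also have "\<dots> = mat_tp_eval q n R c k - coeff \<phi> (k - s) ^ (q ^ s) * u + coeff \<psi> (k - s) * u ^ (q ^ (k - s))"
        by (simp add: mat_tp_eval_def u_def sum.distrib sum_subtractf sum_distrib_left frob_sum)
      finally show ?thesis using True by simp
    qed (simp add: mat_tp_eval_def R''_def)
    show ?thesis
    proof (intro exI[of _ "monom u s"] poly_eqI)
      fix k
      show "coeff (tau_vec (Suc N) (mat_tp_eval q n R c) - tau_vec N (mat_tp_eval q n R'' c)) k =
            coeff (tm (monom u s) \<phi> - tm \<psi> (monom u s)) k"
      proof (cases "k < N")
        case True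
        then show ?thesis by (simp add: coeff_tau_vec coeff_tm_monom_left coeff_tm_monom_right ev)
      next
        case False
        have psi: "coeff \<psi> (k - s) = 0" using False Ns rk by (intro coeff_eq_0) simp
        show ?thesis
        proof (cases "k = N")
          case True
          have "coeff \<phi> (k - s) = lead_coeff \<phi>" using True Ns by simp
          then show ?thesis using True Ns L0 psi
            by (simp add: coeff_tau_vec coeff_tm_monom_left coeff_tm_monom_right u L_def)
        next
          case False
          have "coeff \<phi> (k - s) = 0" using False \<open>\<not> k < N\<close> Ns by (intro coeff_eq_0) simp
          then show ?thesis using False \<open>\<not> k < N\<close> Ns psi
            by (simp add: coeff_tau_vec coeff_tm_monom_left coeff_tm_monom_right)
        qed
      qed
    qed
  qed
  ultimately show ?thesis by blast
qed

lemma reduce: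
  assumes "n \<le> N"
  shows "\<forall>R. rinv R \<longrightarrow> (\<exists>R'. rinv R' \<and> (\<forall>c. \<exists>U. tau_vec N (mat_tp_eval q n R c) - tau_vec n (mat_tp_eval q n R' c)
            = tm U \<phi> - tm \<psi> U))"
  using assms
proof (induction N rule: dec_induct)
  case base
  then show ?case by (metis diff_self tm_zero_left tm_zero_right)
next
  case (step N)
  show ?case
  proof (intro allI impI)
    fix R assume R: "rinv R"
    obtain R'' where R'': "rinv R''" and e1: "\<forall>c. \<exists>U. tau_vec (Suc N) (mat_tp_eval q n R c) - tau_vec N (mat_tp_eval q n R'' c)
            = tm U \<phi> - tm \<psi> U" using red_step[OF step(1) R] by blast
    obtain R' where R': "rinv R'" and e2: "\<forall>c. \<exists>U. tau_vec N (mat_tp_eval q n R'' c) - tau_vec n (mat_tp_eval q n R' c)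
            = tm U \<phi> - tm \<psi> U" using step(3) R'' by blast
    have "\<exists>U. tau_vec (Suc N) (mat_tp_eval q n R c) - tau_vec n (mat_tp_eval q n R' c) = tm U \<phi> - tm \<psi> U" for c
    proof -
      obtain U1 where U1: "tau_vec (Suc N) (mat_tp_eval q n R c) - tau_vec N (mat_tp_eval q n R'' c) = tm U1 \<phi> - tm \<psi> U1"
        using e1 by blast
      obtain U2 where U2: "tau_vec N (mat_tp_eval q n R'' c) - tau_vec n (mat_tp_eval q n R' c) = tm U2 \<phi> - tm \<psi> U2"
        using e2 by blast
      have "tau_vec (Suc N) (mat_tp_eval q n R c) - tau_vec n (mat_tp_eval q n R' c) =
         (tau_vec (Suc N) (mat_tp_eval q n R c) - tau_vec N (mat_tp_eval q n R'' c)) +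
         (tau_vec N (mat_tp_eval q n R'' c) - tau_vec n (mat_tp_eval q n R' c))" by simp
      also have "\<dots> = (tm U1 \<phi> - tm \<psi> U1) + (tm U2 \<phi> - tm \<psi> U2)" by (simp only: U1 U2)
      also have "\<dots> = tm (U1 + U2) \<phi> - tm \<psi> (U1 + U2)" by (simp add: tm_add_left tm_add_right)
      finally have "tau_vec (Suc N) (mat_tp_eval q n R c) - tau_vec n (mat_tp_eval q n R' c) = tm (U1 + U2) \<phi> - tm \<psi> (U1 + U2)" .
      then show ?thesis by blast
    qed
    with R' show "\<exists>R'. rinv R' \<and> (\<forall>c. \<exists>U. tau_vec (Suc N) (mat_tp_eval q n R c) - tau_vec n (mat_tp_eval q n R' c) = tm U \<phi> - tm \<psi> U)"
      by blast
  qed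
qed


definition R0 :: "nat \<Rightarrow> nat \<Rightarrow> 'k poly" where
  "R0 k j = (if j \<le> k then monom (coeff \<psi> (k - j)) (k - j) else 0)"

lemma rinv_R0: "rinv R0"
  unfolding rinv_def R0_def by (auto simp: psi0 monom_0)

lemma R0_eval: "mat_tp_eval q n R0 c k = (\<Sum>j<n. if j \<le> k then coeff \<psi> (k - j) * c j ^ (q ^ (k - j)) else 0)"
  unfolding mat_tp_eval_def R0_def by (rule sum.cong) (auto simp: tp_monom)

lemma R0_poly: "tau_vec (n + degree \<psi>) (mat_tp_eval q n R0 c) = tm \<psi> (tau_vec n c)"
proof (rule poly_eqI)
  fix k
  show "coeff (tau_vec (n + degree \<psi>) (mat_tp_eval q n R0 c)) k = coeff (tm \<psi> (tau_vec n c)) k"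
  proof (cases "k < n + degree \<psi>")
    case False
    have "coeff (tm \<psi> (tau_vec n c)) k = 0"
      unfolding coeff_tm
    proof (rule sum.neutral, intro ballI)
      fix i assume "i \<in> {..k}"
      show "coeff \<psi> i * coeff (tau_vec n c) (k - i) ^ q ^ i = 0"
      proof (cases "i \<le> degree \<psi>")
        case True
        then show ?thesis using False by (simp add: coeff_tau_vec q_pos)
      next
        case False
        then show ?thesis by (simp add: coeff_eq_0)
      qed
    qed
    then show ?thesis using False by (simp add: coeff_tau_vec)
  next
    case True
    define h where "h j = coeff \<psi> (k - j) * (if j < n then c j else 0) ^ (q ^ (k - j))" for j
    have "coeff (tm \<psi> (tau_vec n c)) k = (\<Sum>i<Suc k. h (Suc k - Suc i))"
      unfolding coeff_tm lessThan_Suc_atMost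
      by (rule sum.cong) (auto simp: h_def coeff_tau_vec)
    also have "\<dots> = (\<Sum>j<Suc k. h j)" by (rule sum.nat_diff_reindex)
    also have "\<dots> = (\<Sum>j\<in>{..<Suc k} \<inter> {..<n}. coeff \<psi> (k - j) * c j ^ (q ^ (k - j)))"
      by (rule sum.mono_neutral_cong_right) (auto simp: h_def)
    also have "\<dots> = (\<Sum>j<n. if j \<le> k then coeff \<psi> (k - j) * c j ^ (q ^ (k - j)) else 0)"
      by (rule sum.mono_neutral_cong_left) auto
    finally show ?thesis using True by (simp add: coeff_tau_vec R0_eval)
  qed
qed

lemma part4: "\<exists>P :: nat \<Rightarrow> nat \<Rightarrow> 'k poly.
          t_module \<theta> n P
          \<and> P 0 0 = [:\<theta>:] \<and> (\<forall>j. 0 < j \<and> j < n \<longrightarrow> P 0 j = 0)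
          \<and> (\<forall>c::nat \<Rightarrow> 'k. \<forall>\<delta> \<delta>'.
               biderivation q \<phi> \<psi> \<delta> \<and> \<delta> [:0, 1:] = tau_vec n c \<and>
               biderivation q \<phi> \<psi> \<delta>' \<and> \<delta>' [:0, 1:] = tau_vec n (mat_tp_eval q n P c)
               \<longrightarrow> ext_eq q \<phi> \<psi> (ext_smul q \<psi> [:0, 1:] \<delta>) \<delta>')"
proof -
  obtain P where P: "rinv P" and red: "\<forall>c. \<exists>U. tau_vec (n + degree \<psi>) (mat_tp_eval q n R0 c) - tau_vec n (mat_tp_eval q n P c)
            = tm U \<phi> - tm \<psi> U"
    using reduce[of "n + degree \<psi>"] rinv_R0 by auto
  have tmod: "t_module \<theta> n P"
    unfolding t_module_def
  proof (intro exI[of _ "\<lambda>_ _. 0"] conjI allI impI)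
    show "nilpotent_mat n (\<lambda>_ _. 0::'k)"
      unfolding nilpotent_mat_def by (intro exI[of _ 1]) (simp add: kmatmul_def)
    fix i j assume "i < n" "j < n"
    then show "coeff (P i j) 0 = (if i = j then \<theta> else 0) + 0" using P by (simp add: rinv_def)
  qed
  have P0: "P 0 0 = [:\<theta>:]" "\<forall>j. 0 < j \<and> j < n \<longrightarrow> P 0 j = 0" using P n_pos by (auto simp: rinv_def)
  have "ext_eq q \<phi> \<psi> (ext_smul q \<psi> [:0, 1:] \<delta>) \<delta>'"
    if d: "biderivation q \<phi> \<psi> \<delta>" "\<delta> [:0, 1:] = tau_vec n c"
      and d': "biderivation q \<phi> \<psi> \<delta>'" "\<delta>' [:0, 1:] = tau_vec n (mat_tp_eval q n P c)" for c \<delta> \<delta>'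
  proof -
    obtain U where U: "tau_vec (n + degree \<psi>) (mat_tp_eval q n R0 c) - tau_vec n (mat_tp_eval q n P c)
            = tm U \<phi> - tm \<psi> U" using red by blast
    let ?e = "\<lambda>a. tm \<psi> (\<delta> a) - \<delta>' a"
    let ?i = "\<lambda>a. tm U (dm_eval q \<phi> a) - tm (dm_eval q \<psi> a) U"
    have s1: "stepP \<phi> \<psi> ?e" by (intro step_diff step_lmul bider_step d d')
    have s2: "stepP \<phi> \<psi> ?i" by (rule inner_step)
    have "?e [:0, 1:] = ?i [:0, 1:]" using U d d' by (simp add: R0_poly)
    then have "\<forall>a\<in>Aring q. ?e a = ?i a" using step_unique[OF s1 s2] by blast
    then show ?thesis unfolding ext_eq_def inner_biderivation_def ext_smul_def by auto
  qed
  with tmod P0 show ?thesis by blast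
qed

lemma part1: "\<exists>\<delta>. biderivation q \<phi> \<psi> \<delta> \<and> \<delta> [:0, 1:] = D"
  using bider_exists by blast

lemma part2:
  assumes "biderivation q \<phi> \<psi> \<delta>" "\<delta> [:0, 1:] = tau_vec n c"
    "biderivation q \<phi> \<psi> \<delta>'" "\<delta>' [:0, 1:] = tau_vec n c'" "ext_eq q \<phi> \<psi> \<delta> \<delta>'" "i < n"
  shows "c i = c' i"
proof -
  obtain U where U: "\<forall>a\<in>Aring q. \<delta> a - \<delta>' a = tm U (dm_eval q \<phi> a) - tm (dm_eval q \<psi> a) U"
    using assms(5) unfolding ext_eq_def inner_biderivation_def by blast
  then have eq: "tau_vec n c - tau_vec n c' = tm U \<phi> - tm \<psi> U"
    using assms(2,4) by (metis Aring_t dm_t)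
  have "U = 0"
  proof (rule ccontr)
    assume "U \<noteq> 0"
    then have "coeff (tm U \<phi> - tm \<psi> U) (degree U + n) \<noteq> 0" by (rule inner_t_nonzero)
    moreover have "coeff (tau_vec n c - tau_vec n c') (degree U + n) = 0" by (simp add: coeff_tau_vec)
    ultimately show False using eq by simp
  qed
  then have "tau_vec n c = tau_vec n c'" using eq by simp
  then have "coeff (tau_vec n c) i = coeff (tau_vec n c') i" by simp
  then show ?thesis using assms(6) by (simp add: coeff_tau_vec)
qed

lemma part3:
  assumes d: "biderivation q \<phi> \<psi> \<delta>"
  shows "\<exists>c::nat \<Rightarrow> 'k. \<exists>\<delta>'. biderivation q \<phi> \<psi> \<delta>' \<and> \<delta>' [:0, 1:] = tau_vec n c \<and> ext_eq q \<phi> \<psi> \<delta> \<delta>'"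
proof -
  obtain U where U: "degree (\<delta> [:0, 1:] - (tm U \<phi> - tm \<psi> U)) < n" using division by blast
  define \<delta>' where "\<delta>' a = \<delta> a - (tm U (dm_eval q \<phi> a) - tm (dm_eval q \<psi> a) U)" for a
  have add: "\<And>a b. a \<in> Aring q \<Longrightarrow> b \<in> Aring q \<Longrightarrow> \<delta> (a + b) = \<delta> a + \<delta> b"
    and lin: "\<And>c a. c \<in> Fq q \<Longrightarrow> a \<in> Aring q \<Longrightarrow> \<delta> (smult c a) = smult c (\<delta> a)"
    using d by (auto simp: biderivation_def)
  have bd: "biderivation q \<phi> \<psi> \<delta>'"
  proof (rule step_bider)
    show "stepP \<phi> \<psi> \<delta>'" unfolding \<delta>'_def by (intro step_diff inner_step bider_step d)
  next
    fix a b :: "'k poly" assume "a \<in> Aring q" "b \<in> Aring q"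
    then show "\<delta>' (a + b) = \<delta>' a + \<delta>' b"
      by (simp add: \<delta>'_def add dm_add tm_add_left tm_add_right)
  next
    fix c :: 'k and a :: "'k poly" assume "c \<in> Fq q" "a \<in> Aring q"
    then show "\<delta>' (smult c a) = smult c (\<delta>' a)"
      by (simp add: \<delta>'_def lin dm_smult tm_smult_left tm_smult_right smult_diff_right)
  qed
  have "\<delta>' [:0, 1:] = tau_vec n (coeff (\<delta>' [:0, 1:]))"
    using U n_pos by (simp add: \<delta>'_def tau_vec_coeff)
  moreover have "ext_eq q \<phi> \<psi> \<delta> \<delta>'"
    unfolding ext_eq_def inner_biderivation_def \<delta>'_def by auto
  ultimately show ?thesis using bd by blast
qed

end


lemma frob_p:
  fixes x y :: "'a::comm_ring_1"
  assumes p: "prime p" and c: "of_nat p = (0::'a)"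
  shows "(x + y) ^ p = x ^ p + y ^ p"
proof -
  have p0: "p \<noteq> 0" using p by auto
  have "(x + y) ^ p = (\<Sum>k\<le>p. of_nat (p choose k) * x ^ k * y ^ (p - k))"
    by (rule binomial_ring)
  also have "\<dots> = (\<Sum>k\<in>{0, p}. of_nat (p choose k) * x ^ k * y ^ (p - k))"
  proof (rule sum.mono_neutral_right)
    show "\<forall>k\<in>{..p} - {0, p}. of_nat (p choose k) * x ^ k * y ^ (p - k) = 0"
    proof
      fix k assume k: "k \<in> {..p} - {0, p}"
      then have "p dvd (p choose k)" using p p0 by (intro dvd_choose_prime) auto
      then obtain m where "p choose k = p * m" by blast
      then have "(of_nat (p choose k) :: 'a) = 0" using c by simp
      then show "of_nat (p choose k) * x ^ k * y ^ (p - k) = 0" by simp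
    qed
  qed auto
  also have "\<dots> = x ^ p + y ^ p" using p0 by simp
  finally show ?thesis .
qed

lemma frob_pe:
  fixes x y :: "'a::comm_ring_1"
  assumes p: "prime p" and c: "of_nat p = (0::'a)"
  shows "(x + y) ^ (p ^ e) = x ^ (p ^ e) + y ^ (p ^ e)"
proof (induction e)
  case (Suc e)
  have "(x + y) ^ (p ^ Suc e) = ((x + y) ^ (p ^ e)) ^ p"
    by (simp add: power_mult[symmetric] mult.commute)
  also have "\<dots> = (x ^ (p ^ e)) ^ p + (y ^ (p ^ e)) ^ p" by (simp add: Suc frob_p[OF p c])
  also have "\<dots> = x ^ (p ^ Suc e) + y ^ (p ^ Suc e)"
    by (simp add: power_mult[symmetric] mult.commute)
  finally show ?case .
qed simp

lemma kmatpow_1: "kmatpow (Suc 0) N m 0 0 = (N 0 0) ^ m"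
  by (induction m) (simp_all add: kmatmul_def)

lemma dm_coeff0: "drinfeld_module \<theta> f \<Longrightarrow> coeff f 0 = \<theta>"
  unfolding drinfeld_module_def t_module_def nilpotent_mat_def
  by (auto simp: kmatpow_1)

lemma drank: "drinfeld_rank f = degree f"
proof -
  have "{degree f |i j. i < (1::nat) \<and> j < (1::nat)} = {degree f}" by auto
  then show ?thesis by (simp add: drinfeld_rank_def t_rank_def)
qed

theorem proposition5p1:
  fixes p q e :: nat and \<theta> :: "'k::field" and \<phi>t \<psi>t :: "'k poly" and n :: nat
  assumes "prime p" and "of_nat p = (0::'k)"
    and "e \<ge> 1" and "q = p ^ e"
    and "card (Fq q :: 'k set) = q"
    and "drinfeld_module \<theta> \<phi>t" and "drinfeld_module \<theta> \<psi>t"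
    and "n = drinfeld_rank \<phi>t" and "n > drinfeld_rank \<psi>t"
  shows
    \<comment> \<open>c \<mapsto> class of the biderivation with delta(t) = sum c_i tau^i is a bijection K^n -> Ext\<close>
    "(\<forall>c::nat \<Rightarrow> 'k. \<exists>\<delta>. biderivation q \<phi>t \<psi>t \<delta> \<and> \<delta> [:0, 1:] = tau_vec n c)
     \<and> (\<forall>c c' :: nat \<Rightarrow> 'k. \<forall>\<delta> \<delta>'.
          biderivation q \<phi>t \<psi>t \<delta> \<and> \<delta> [:0, 1:] = tau_vec n c \<and>
          biderivation q \<phi>t \<psi>t \<delta>' \<and> \<delta>' [:0, 1:] = tau_vec n c' \<and>
          ext_eq q \<phi>t \<psi>t \<delta> \<delta>' \<longrightarrow> (\<forall>i<n. c i = c' i))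
     \<and> (\<forall>\<delta>. biderivation q \<phi>t \<psi>t \<delta> \<longrightarrow>
          (\<exists>c::nat \<Rightarrow> 'k. \<exists>\<delta>'. biderivation q \<phi>t \<psi>t \<delta>' \<and> \<delta>' [:0, 1:] = tau_vec n c \<and>
                ext_eq q \<phi>t \<psi>t \<delta> \<delta>'))
     \<and> (\<exists>P :: nat \<Rightarrow> nat \<Rightarrow> 'k poly.
          t_module \<theta> n P
          \<and> P 0 0 = [:\<theta>:] \<and> (\<forall>j. 0 < j \<and> j < n \<longrightarrow> P 0 j = 0)
          \<and> (\<forall>c::nat \<Rightarrow> 'k. \<forall>\<delta> \<delta>'.
               biderivation q \<phi>t \<psi>t \<delta> \<and> \<delta> [:0, 1:] = tau_vec n c \<and>
               biderivation q \<phi>t \<psi>t \<delta>' \<and> \<delta>' [:0, 1:] = tau_vec n (mat_tp_eval q n P c)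
               \<longrightarrow> ext_eq q \<phi>t \<psi>t (ext_smul q \<psi>t [:0, 1:] \<delta>) \<delta>'))"
proof -
  have qpos: "q > 0" using assms(1,4) by (simp add: prime_gt_0_nat)
  have fr: "\<And>x y :: 'k. (x + y) ^ q = x ^ q + y ^ q"
    using assms(4) frob_pe[OF assms(1,2)] by simp
  interpret tw q
    by unfold_locales (use qpos fr in auto)
  have n: "n = degree \<phi>t" using assms(8) by (simp add: drank)
  interpret tw2 q \<phi>t \<psi>t \<theta>
    by unfold_locales (use assms(6,7,8,9) in \<open>auto simp: dm_coeff0 drank\<close>)
  show ?thesis
    unfolding n
    using part1 part2 part3 part4 by blast
qed

end
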